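(* Let $n\ge1$, $0<T\le\infty$, $a\in\mathbb{R}$, and let $0\le u_0\in C(\mathbb{R}^n)$ with $u_0\not\equiv0$. If $0\le\mu\in\mathcal{Z}_{T,a}$ satisfies $$\mu(x,t)\ge u_0(x)+\int_0^t\mathcal{B}\mu(x,\tau)\,d\tau\qquad\text{on }Q_T,$$ then for every $\delta>1$ and $0<t_0<T$ there is a constant $C_0=C_0(\delta,t_0,u_0)>0$ such that $$\int_0^{t_0}\mathcal{B}\mu(x,\tau)\,d\tau\ge C_0e^{-\delta|x|}\qquad(x\in\mathbb{R}^n).$$ In particular, if $0<p<1$, $V\ge0$ is continuous, $u$ is an s-supersolution of $\partial_tu-\Delta\partial_tu=\Delta u+Vu^p$, $u(\cdot,0)=u_0$, on $Q_T$ and $\mu=e^tu$, then $$\mu(x,t_0)\ge u_0(x)+\int_0^{t_0}\mathcal{B}\mu\,d\tau+\int_0^{t_0}e^{(1-p)\tau}\mathcal{B}[V\mu^p]\,d\tau\ge C_0e^{-\delta|x|}\qquad(x\in\mathbb{R}^n).$$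
   Context: $\mathcal{B}\varphi=B*\varphi$, $B=\mathcal{F}^{-1}((1+|\xi|^2)^{-1})$. $BC_a$: continuous functions with $|\varphi(x)|\le C|x|^a$ for large $|x|$; $\mathcal{Z}_{T,a}=C([0,T);BC_a)$, $Q_T=\mathbb{R}^n\times[0,T)$. $u$ is an s-supersolution on $Q_T$ if $\mu=e^tu\in\mathcal{Z}_{T,a}$ and $\mu(t)\ge u_0+\int_0^t\mathcal{B}\mu\,d\tau+\int_0^te^{(1-p)\tau}\mathcal{B}[V\mu^p]\,d\tau$ on $Q_T$. *)

theory Defs
  imports "HOL-Analysis.Analysis"
begin

text \<open>Bessel kernel B = inverse Fourier transform of (1+|xi|^2)^(-1) on R^n,
  written via the subordination formula (1+|xi|^2)^(-1) = int_0^oo e^(-s) e^(-s|xi|^2) ds,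
  i.e. B(x) = int_0^oo e^(-s) (4 pi s)^(-n/2) e^(-|x|^2/(4s)) ds.\<close>
definition Bker :: "real^'n \<Rightarrow> real" where
  "Bker x = (LINT s:{0<..}|lborel.
      exp (- s) * (4 * pi * s) powr (- real CARD('n) / 2) * exp (- (norm x)\<^sup>2 / (4 * s)))"

definition Bop :: "(real^'n \<Rightarrow> real) \<Rightarrow> real^'n \<Rightarrow> real" where
  "Bop \<phi> x = (LINT y|lborel. Bker (x - y) * \<phi> y)"

definition BC :: "real \<Rightarrow> (real^'n \<Rightarrow> real) set" where
  "BC a = {\<phi>. continuous_on UNIV \<phi> \<and>
     (\<exists>C R. \<forall>x. R \<le> norm x \<longrightarrow> \<bar>\<phi> x\<bar> \<le> C * norm x powr a)}"

definition Tset :: "ereal \<Rightarrow> real set" where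
  "Tset T = {t. 0 \<le> t \<and> ereal t < T}"

text \<open>Z_{T,a} = C([0,T); BC_a), continuity in time with respect to the weighted
  sup norm  sup_x |phi(x)| / (1+|x|)^a  of BC_a.\<close>
definition Z :: "ereal \<Rightarrow> real \<Rightarrow> (real^'n \<Rightarrow> real \<Rightarrow> real) set" where
  "Z T a = {\<mu>. (\<forall>t\<in>Tset T. (\<lambda>x. \<mu> x t) \<in> BC a) \<and>
     (\<forall>t\<in>Tset T. \<forall>\<epsilon>>0. \<exists>d>0. \<forall>s\<in>Tset T. \<bar>s - t\<bar> < d \<longrightarrow>
        (\<forall>x. \<bar>\<mu> x s - \<mu> x t\<bar> \<le> \<epsilon> * (1 + norm x) powr a))}"

text \<open>u is an s-supersolution of u_t - Delta u_t = Delta u + V u^p, u(.,0)=u0 on Q_T.\<close>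
definition s_supersol ::
  "real \<Rightarrow> (real^'n \<Rightarrow> real) \<Rightarrow> (real^'n \<Rightarrow> real) \<Rightarrow> ereal \<Rightarrow> real
     \<Rightarrow> (real^'n \<Rightarrow> real \<Rightarrow> real) \<Rightarrow> bool" where
  "s_supersol p V u0 T a u \<longleftrightarrow>
     (\<lambda>x t. exp t * u x t) \<in> Z T a \<and>
     (\<forall>x. \<forall>t\<in>Tset T.
        exp t * u x t \<ge> u0 x
          + (LINT \<tau>:{0..t}|lborel. Bop (\<lambda>y. exp \<tau> * u y \<tau>) x)
          + (LINT \<tau>:{0..t}|lborel. exp ((1 - p) * \<tau>) *
               Bop (\<lambda>y. V y * (exp \<tau> * u y \<tau>) powr p) x))"

end

theory Submission
  imports Defs "HOL-Probability.Distributions"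
begin

lemma poly_exp_bound:
  fixes b e :: real assumes "0 \<le> b" "0 < e"
  shows "\<exists>C>0. \<forall>y\<ge>0. y powr b \<le> C * exp (e * y)"
proof (cases "b = 0")
  case True
  show ?thesis using assms by (intro exI[of _ 1]) (auto simp: True)
next
  case False
  hence bp: "b > 0" using assms by auto
  show ?thesis
  proof (rule exI[of _ "(b/e) powr b"], intro conjI allI impI)
    show "(b/e) powr b > 0" using bp assms by simp
    fix y :: real assume y: "y \<ge> 0"
    have "e* y/b \<le> exp (e* y/b)" using exp_ge_add_one_self[of "e* y/b"] by linarith
    hence "y \<le> (b/e) * exp (e* y/b)" using bp assms by (simp add: field_simps)
    hence "y powr b \<le> ((b/e) * exp (e* y/b)) powr b" using y bp by (intro powr_mono2) auto
    also have "\<dots> = (b/e) powr b * exp (e* y)"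
    proof -
      have "((b/e) * exp (e* y/b)) powr b = (b/e) powr b * exp (e* y/b) powr b"
        using bp assms powr_mult[of "b/e" "exp (e* y/b)" b] by (simp del: times_divide_eq_left times_divide_eq_right)
      also have "exp (e* y/b) powr b = exp (e* y)" using bp by (simp add: exp_powr_real)
      finally show ?thesis .
    qed
    finally show "y powr b \<le> (b/e) powr b * exp (e * y)" .
  qed
qed

lemma exp_neg_int: "(\<integral>\<^sup>+x. ennreal (exp (-x)) * indicator {0..} x \<partial>lborel) = 1"
  using nn_intergal_power_times_exp_Ici[of 0] by simp

lemma exp_abs_int: "(\<integral>\<^sup>+x. ennreal (exp (-\<bar>x\<bar>)) \<partial>lborel) \<le> 2"
proof -
  let ?f = "\<lambda>x::real. ennreal (exp (-x)) * indicator {0..} x"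
  have "(\<integral>\<^sup>+x. ennreal (exp (-\<bar>x\<bar>)) \<partial>lborel) \<le> (\<integral>\<^sup>+x. ?f x + ?f (-x) \<partial>lborel)"
    by (intro nn_integral_mono) (auto simp: indicator_def)
  also have "\<dots> = (\<integral>\<^sup>+x. ?f x \<partial>lborel) + (\<integral>\<^sup>+x. ?f (-x) \<partial>lborel)"
    by (intro nn_integral_add) auto
  also have "(\<integral>\<^sup>+x. ?f (-x) \<partial>lborel) = (\<integral>\<^sup>+x. ?f x \<partial>lborel)"
    using nn_integral_real_affine[of ?f "-1" 0] by simp
  finally show ?thesis using exp_neg_int by (simp add: one_add_one[symmetric] del: one_add_one)
qed

definition Jb :: "real \<Rightarrow> ennreal" where
  "Jb b = (\<integral>\<^sup>+v. ennreal (exp (-v\<^sup>2) * (1+\<bar>v\<bar>) powr b) \<partial>lborel)"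

lemma Jb_finite: assumes "0 \<le> b" shows "Jb b < \<infinity>"
proof -
  obtain C where C: "C > 0" "\<And>y. y \<ge> 0 \<Longrightarrow> y powr b \<le> C * exp (1 * y)"
    using poly_exp_bound[OF assms, of 1] by auto
  have pt: "exp (-v\<^sup>2) * (1+\<bar>v\<bar>) powr b \<le> (C * exp 2) * exp (-\<bar>v\<bar>)" for v :: real
  proof -
    have "(1+\<bar>v\<bar>) powr b \<le> C * exp (1 + \<bar>v\<bar>)" using C(2)[of "1+\<bar>v\<bar>"] by simp
    moreover have "exp (-v\<^sup>2) \<le> exp (1 - 2*\<bar>v\<bar>)"
    proof -
      have "0 \<le> (\<bar>v\<bar> - 1)\<^sup>2" by simp
      also have "\<dots> = v\<^sup>2 - 2 * \<bar>v\<bar> + 1" by (simp add: power2_diff)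
      finally have "-v\<^sup>2 \<le> 1 - 2*\<bar>v\<bar>" by linarith
      thus ?thesis by simp
    qed
    ultimately have "exp (-v\<^sup>2) * (1+\<bar>v\<bar>) powr b \<le> exp (1 - 2*\<bar>v\<bar>) * (C * exp (1 + \<bar>v\<bar>))"
      by (intro mult_mono) auto
    also have "\<dots> = C * (exp (1 - 2*\<bar>v\<bar>) * exp (1 + \<bar>v\<bar>))" by simp
    also have "exp (1 - 2*\<bar>v\<bar>) * exp (1 + \<bar>v\<bar>) = exp ((1 - 2*\<bar>v\<bar>) + (1 + \<bar>v\<bar>))"
      by (simp only: exp_add)
    also have "(1 - 2*\<bar>v\<bar>) + (1 + \<bar>v\<bar>) = 2 + (-\<bar>v\<bar>)" by simp
    also have "exp (2 + (-\<bar>v\<bar>)) = exp 2 * exp (-\<bar>v\<bar>)" by (simp only: exp_add)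
    finally show ?thesis by (simp add: mult.assoc)
  qed
  have "Jb b \<le> (\<integral>\<^sup>+v. ennreal (C * exp 2) * ennreal (exp (-\<bar>v\<bar>)) \<partial>lborel)"
    unfolding Jb_def using pt C(1)
    by (intro nn_integral_mono) (simp add: ennreal_mult[symmetric])
  also have "\<dots> = ennreal (C * exp 2) * (\<integral>\<^sup>+v. ennreal (exp (-\<bar>v\<bar>)) \<partial>lborel)"
    by (intro nn_integral_cmult) auto
  also have "\<dots> \<le> ennreal (C * exp 2) * 2" by (intro mult_left_mono exp_abs_int) auto
  also have "\<dots> < \<infinity>" by (simp add: ennreal_mult_less_top)
  finally show ?thesis .
qed

lemma gauss1:
  fixes s b c :: real assumes s: "0 < s" and b: "0 \<le> b"
  shows "(\<integral>\<^sup>+t. ennreal (exp (-(c-t)\<^sup>2/(4* s)) * (1+\<bar>c-t\<bar>) powr b) \<partial>lborel)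
     \<le> ennreal (2 * sqrt s * (1 + 2 * sqrt s) powr b) * Jb b"
proof -
  define g where "g u = ennreal (exp (-u\<^sup>2/(4* s)) * (1+\<bar>u\<bar>) powr b)" for u :: real
  have gm[measurable]: "g \<in> borel_measurable borel" unfolding g_def by measurable
  have "(\<integral>\<^sup>+t. g (c - t) \<partial>lborel) = (\<integral>\<^sup>+u. g u \<partial>lborel)"
    using nn_integral_real_affine[OF gm, of "-1" c] by simp
  also have "\<dots> = ennreal (2 * sqrt s) * (\<integral>\<^sup>+v. g (0 + (2 * sqrt s) * v) \<partial>lborel)"
    using nn_integral_real_affine[OF gm, of "2 * sqrt s" 0] s by simp
  also have "(\<integral>\<^sup>+v. g (0 + (2 * sqrt s) * v) \<partial>lborel) \<le>
      (\<integral>\<^sup>+v. ennreal ((1 + 2 * sqrt s) powr b) * ennreal (exp (-v\<^sup>2) * (1+\<bar>v\<bar>) powr b) \<partial>lborel)"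
  proof (intro nn_integral_mono)
    fix v :: real
    have e: "(2 * sqrt s * v)\<^sup>2 / (4 * s) = v\<^sup>2" using s by (simp add: power_mult_distrib)
    have "(1 + \<bar>2 * sqrt s * v\<bar>) powr b \<le> ((1 + 2 * sqrt s) * (1+\<bar>v\<bar>)) powr b"
      using s b by (intro powr_mono2) (auto simp: abs_mult algebra_simps)
    also have "\<dots> = (1 + 2 * sqrt s) powr b * (1+\<bar>v\<bar>) powr b" by (simp add: powr_mult)
    finally have "exp (-v\<^sup>2) * (1 + \<bar>2 * sqrt s * v\<bar>) powr b \<le> (1 + 2 * sqrt s) powr b * (exp (-v\<^sup>2) * (1+\<bar>v\<bar>) powr b)"
      by (simp add: mult_left_mono)
    thus "g (0 + 2 * sqrt s * v) \<le> ennreal ((1 + 2 * sqrt s) powr b) * ennreal (exp (-v\<^sup>2) * (1+\<bar>v\<bar>) powr b)"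
      unfolding g_def using e by (simp add: ennreal_mult[symmetric])
  qed
  also have "\<dots> = ennreal ((1 + 2 * sqrt s) powr b) * Jb b"
    unfolding Jb_def by (intro nn_integral_cmult) auto
  finally show ?thesis unfolding g_def using s
    by (simp add: ennreal_mult mult.assoc mult_left_mono)
qed

lemma prod_mono_enn:
  fixes f g :: "'a \<Rightarrow> ennreal"
  shows "(\<And>i. i \<in> A \<Longrightarrow> f i \<le> g i) \<Longrightarrow> prod f A \<le> prod g A"
  by (induction A rule: infinite_finite_induct) (auto intro!: mult_mono)

lemma one_plus_sum_le_prod:
  fixes a :: "'a \<Rightarrow> real"
  assumes "finite A" "\<And>i. i \<in> A \<Longrightarrow> 0 \<le> a i"
  shows "1 + sum a A \<le> (\<Prod>i\<in>A. 1 + a i)"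
  using assms
proof (induction A rule: finite_induct)
  case empty then show ?case by simp
next
  case (insert x F)
  have ax: "0 \<le> a x" using insert by auto
  have sF: "0 \<le> sum a F" using insert by (auto intro: sum_nonneg)
  have IH: "1 + sum a F \<le> (\<Prod>i\<in>F. 1 + a i)" using insert by auto
  have "1 + sum a (insert x F) = 1 + a x + sum a F" using insert by simp
  also have "\<dots> \<le> (1 + a x) * (1 + sum a F)" using ax sF by (simp add: algebra_simps)
  also have "\<dots> \<le> (1 + a x) * (\<Prod>i\<in>F. 1 + a i)" using IH ax by (intro mult_left_mono) auto
  also have "\<dots> = (\<Prod>i\<in>insert x F. 1 + a i)" using insert by simp
  finally show ?case .
qed

lemma gauss_pointwise:
  fixes x y :: "'a::euclidean_space" and s b :: real
  assumes s: "0 < s" and b: "0 \<le> b"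
  shows "exp (-(norm (x - y))\<^sup>2 / (4 * s)) * (1 + norm y) powr b \<le>
    (\<Prod>i\<in>Basis. (1 + \<bar>x \<bullet> i\<bar>) powr b) *
    (\<Prod>i\<in>Basis. exp (-(x \<bullet> i - y \<bullet> i)\<^sup>2 / (4 * s)) * (1 + \<bar>x \<bullet> i - y \<bullet> i\<bar>) powr b)"
proof -
  have n2: "(norm (x - y))\<^sup>2 = (\<Sum>i\<in>Basis. (x \<bullet> i - y \<bullet> i)\<^sup>2)"
  proof -
    have "(norm (x - y))\<^sup>2 = (x - y) \<bullet> (x - y)" by (rule power2_norm_eq_inner)
    also have "\<dots> = (\<Sum>i\<in>Basis. ((x - y) \<bullet> i) * ((x - y) \<bullet> i))" by (rule euclidean_inner)
    also have "\<dots> = (\<Sum>i\<in>Basis. (x \<bullet> i - y \<bullet> i)\<^sup>2)" by (simp add: inner_diff_left power2_eq_square)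
    finally show ?thesis .
  qed
  have e: "exp (-(norm (x - y))\<^sup>2 / (4 * s)) = (\<Prod>i\<in>Basis. exp (-(x \<bullet> i - y \<bullet> i)\<^sup>2 / (4 * s)))"
    unfolding n2 by (simp add: exp_sum[symmetric] sum_divide_distrib sum_negf)
  have "1 + norm y \<le> 1 + (\<Sum>i\<in>Basis. \<bar>y \<bullet> i\<bar>)" using norm_le_l1[of y] by simp
  also have "\<dots> \<le> (\<Prod>i\<in>Basis. 1 + \<bar>y \<bullet> i\<bar>)" by (intro one_plus_sum_le_prod) auto
  finally have "(1 + norm y) powr b \<le> (\<Prod>i\<in>Basis. 1 + \<bar>y \<bullet> i\<bar>) powr b"
    using b by (intro powr_mono2) auto
  also have "\<dots> = (\<Prod>i\<in>Basis. (1 + \<bar>y \<bullet> i\<bar>) powr b)" by (simp add: prod_powr_distrib)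
  also have "\<dots> \<le> (\<Prod>i\<in>Basis. (1 + \<bar>x \<bullet> i\<bar>) powr b * (1 + \<bar>x \<bullet> i - y \<bullet> i\<bar>) powr b)"
  proof (intro prod_mono conjI)
    fix i :: 'a
    have "1 + \<bar>y \<bullet> i\<bar> \<le> (1 + \<bar>x \<bullet> i\<bar>) * (1 + \<bar>x \<bullet> i - y \<bullet> i\<bar>)"
    proof -
      have t: "\<bar>y \<bullet> i\<bar> \<le> \<bar>x \<bullet> i\<bar> + \<bar>x \<bullet> i - y \<bullet> i\<bar>" by arith
      have "0 \<le> \<bar>x \<bullet> i\<bar> * \<bar>x \<bullet> i - y \<bullet> i\<bar>" by simp
      moreover have "(1 + \<bar>x \<bullet> i\<bar>) * (1 + \<bar>x \<bullet> i - y \<bullet> i\<bar>) = 1 + \<bar>x \<bullet> i\<bar> + \<bar>x \<bullet> i - y \<bullet> i\<bar> + \<bar>x \<bullet> i\<bar> * \<bar>x \<bullet> i - y \<bullet> i\<bar>"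
        by (simp add: algebra_simps)
      ultimately show ?thesis using t by linarith
    qed
    hence "(1 + \<bar>y \<bullet> i\<bar>) powr b \<le> ((1 + \<bar>x \<bullet> i\<bar>) * (1 + \<bar>x \<bullet> i - y \<bullet> i\<bar>)) powr b"
      using b by (intro powr_mono2) auto
    thus "(1 + \<bar>y \<bullet> i\<bar>) powr b \<le> (1 + \<bar>x \<bullet> i\<bar>) powr b * (1 + \<bar>x \<bullet> i - y \<bullet> i\<bar>) powr b"
      by (simp add: powr_mult)
  qed auto
  also have "\<dots> = (\<Prod>i\<in>Basis. (1 + \<bar>x \<bullet> i\<bar>) powr b) * (\<Prod>i\<in>Basis. (1 + \<bar>x \<bullet> i - y \<bullet> i\<bar>) powr b)"
    by (simp add: prod.distrib)
  finally have w: "(1 + norm y) powr b \<le> \<dots>" .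
  have "exp (-(norm (x - y))\<^sup>2 / (4 * s)) * (1 + norm y) powr b \<le>
     (\<Prod>i\<in>Basis. exp (-(x \<bullet> i - y \<bullet> i)\<^sup>2 / (4 * s))) *
     ((\<Prod>i\<in>Basis. (1 + \<bar>x \<bullet> i\<bar>) powr b) * (\<Prod>i\<in>Basis. (1 + \<bar>x \<bullet> i - y \<bullet> i\<bar>) powr b))"
    unfolding e by (intro mult_left_mono w) (auto intro: prod_nonneg)
  also have "\<dots> = (\<Prod>i\<in>Basis. (1 + \<bar>x \<bullet> i\<bar>) powr b) *
    (\<Prod>i\<in>Basis. exp (-(x \<bullet> i - y \<bullet> i)\<^sup>2 / (4 * s)) * (1 + \<bar>x \<bullet> i - y \<bullet> i\<bar>) powr b)"
    by (simp add: prod.distrib)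
  finally show ?thesis .
qed

lemma gaussn:
  fixes x :: "'a::euclidean_space" and s b :: real
  assumes s: "0 < s" and b: "0 \<le> b"
  shows "(\<integral>\<^sup>+y. ennreal (exp (-(norm (x - y))\<^sup>2 / (4 * s)) * (1 + norm y) powr b) \<partial>lborel) \<le>
    ennreal (\<Prod>i\<in>Basis. (1 + \<bar>x \<bullet> i\<bar>) powr b) *
    (ennreal (2 * sqrt s * (1 + 2 * sqrt s) powr b) * Jb b) ^ DIM('a)"
proof -
  define h where "h i t = ennreal (exp (-(x \<bullet> i - t)\<^sup>2 / (4 * s)) * (1 + \<bar>x \<bullet> i - t\<bar>) powr b)" for i t
  have hm[measurable]: "h i \<in> borel_measurable borel" for i unfolding h_def by measurable
  have "(\<integral>\<^sup>+y. ennreal (exp (-(norm (x - y))\<^sup>2 / (4 * s)) * (1 + norm y) powr b) \<partial>lborel) \<le>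
     (\<integral>\<^sup>+y. ennreal (\<Prod>i\<in>Basis. (1 + \<bar>x \<bullet> i\<bar>) powr b) * (\<Prod>i\<in>Basis. h i (y \<bullet> i)) \<partial>lborel)"
  proof (intro nn_integral_mono)
    fix y :: 'a
    have "(\<Prod>i\<in>Basis. h i (y \<bullet> i)) = ennreal (\<Prod>i\<in>Basis. exp (-(x \<bullet> i - y \<bullet> i)\<^sup>2 / (4 * s)) * (1 + \<bar>x \<bullet> i - y \<bullet> i\<bar>) powr b)"
      unfolding h_def by (intro prod_ennreal) auto
    thus "ennreal (exp (-(norm (x - y))\<^sup>2 / (4 * s)) * (1 + norm y) powr b) \<le>
      ennreal (\<Prod>i\<in>Basis. (1 + \<bar>x \<bullet> i\<bar>) powr b) * (\<Prod>i\<in>Basis. h i (y \<bullet> i))"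
      using gauss_pointwise[OF s b, of x y]
      by (simp add: ennreal_mult[symmetric] prod_nonneg)
  qed
  also have "\<dots> = ennreal (\<Prod>i\<in>Basis. (1 + \<bar>x \<bullet> i\<bar>) powr b) * (\<integral>\<^sup>+y. (\<Prod>i\<in>Basis. h i (y \<bullet> i)) \<partial>lborel)"
    by (intro nn_integral_cmult) measurable
  also have "(\<integral>\<^sup>+y. (\<Prod>i\<in>Basis. h i (y \<bullet> i)) \<partial>lborel) = (\<Prod>i\<in>Basis. (\<integral>\<^sup>+t. h i t \<partial>lborel))"
    by (intro nn_integral_lborel_prod hm) auto
  also have "\<dots> \<le> (\<Prod>i\<in>(Basis::'a set). ennreal (2 * sqrt s * (1 + 2 * sqrt s) powr b) * Jb b)"
    unfolding h_def by (intro prod_mono_enn gauss1 s b)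
  also have "\<dots> = (ennreal (2 * sqrt s * (1 + 2 * sqrt s) powr b) * Jb b) ^ DIM('a)" by simp
  finally show ?thesis by (simp add: mult_left_mono)
qed

lemma kfactor:
  fixes s :: real assumes s: "0 < s"
  shows "(4 * pi * s) powr (- real D / 2) * (2 * sqrt s) ^ D = pi powr (- real D / 2)"
proof -
  have "2 * sqrt s = (4 * s) powr (1/2)" using s
    by (simp add: powr_half_sqrt real_sqrt_mult)
  hence "(2 * sqrt s) ^ D = (4 * s) powr (real D / 2)"
    using s by (simp add: powr_realpow[symmetric] powr_powr)
  moreover have "(4 * pi * s) powr (- real D / 2) = pi powr (- real D / 2) * (4 * s) powr (- real D / 2)"
    using s by (simp add: powr_mult[symmetric] mult.commute mult.left_commute)
  moreover have "(4 * s) powr (- real D / 2) * (4 * s) powr (real D / 2) = 1"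
    using s by (simp add: powr_add[symmetric])
  ultimately show ?thesis by (simp add: mult.assoc)
qed

lemma exp_half_int: "(\<integral>\<^sup>+s. ennreal (exp (-s/2)) * indicator {0..} s \<partial>lborel) = 2"
proof -
  let ?f = "\<lambda>s::real. ennreal (exp (-s/2)) * indicator {0..} s"
  have "(\<integral>\<^sup>+s. ?f s \<partial>lborel) = 2 * (\<integral>\<^sup>+x. ?f (0 + 2 * x) \<partial>lborel)"
    using nn_integral_real_affine[of ?f 2 0] by simp
  also have "(\<lambda>x. ?f (0 + 2 * x)) = (\<lambda>x. ennreal (exp (-x)) * indicator {0..} x)"
    by (auto simp: indicator_def fun_eq_iff)
  finally show ?thesis using exp_neg_int by simp
qed

lemma ennr3: "0 \<le> A \<Longrightarrow> 0 \<le> P \<Longrightarrow> 0 \<le> Q \<Longrightarrow>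
  ennreal A * (ennreal P * (ennreal Q * J)) = ennreal (A * P * Q) * J"
  by (simp add: ennreal_mult mult.assoc)

definition kk :: "real \<Rightarrow> real \<Rightarrow> real \<Rightarrow> real" where
  "kk d s r = exp (- s) * (4 * pi * s) powr (- d / 2) * exp (- r\<^sup>2 / (4 * s))"

lemma kk_nonneg: "0 \<le> kk d s r" unfolding kk_def by simp

lemma weight_fin:
  fixes x :: "'a::euclidean_space" and b :: real
  assumes b: "0 \<le> b"
  shows "(\<integral>\<^sup>+y. (\<integral>\<^sup>+s. ennreal (indicator {0<..} s * kk (real DIM('a)) s (norm (x - y))) \<partial>lborel)
            * ennreal ((1 + norm y) powr b) \<partial>lborel) < \<infinity>"
proof -
  define D where "D = DIM('a)"
  define P where "P = (\<Prod>i\<in>(Basis::'a set). (1 + \<bar>x \<bullet> i\<bar>) powr b)"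
  have P0: "0 \<le> P" unfolding P_def by (auto intro: prod_nonneg)
  obtain C where C: "C > 0" "\<And>y. y \<ge> 0 \<Longrightarrow> y powr (b * real D) \<le> C * exp ((1/2) * y)"
    using poly_exp_bound[of "b * real D" "1/2"] b by auto
  have cm: "(\<integral>\<^sup>+s. ennreal (pi powr (- real D / 2) * C * exp 1 * P) * (ennreal (exp (-s/2)) * indicator {0..} s) \<partial>lborel)
     = ennreal (pi powr (- real D / 2) * C * exp 1 * P) * (\<integral>\<^sup>+s. ennreal (exp (-s/2)) * indicator {0..} s \<partial>lborel)"
    by (rule nn_integral_cmult) simp
  have pf: "pair_sigma_finite (lborel :: real measure) (lborel :: 'a measure)"
    by (intro pair_sigma_finite.intro lborel.sigma_finite_measure_axioms)
  define F where "F s y = ennreal (indicator {0<..} s * kk (real D) s (norm (x - y)) * (1 + norm y) powr b)"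
    for s :: real and y :: 'a
  have Fm: "case_prod F \<in> borel_measurable (lborel \<Otimes>\<^sub>M lborel)"
    unfolding F_def kk_def by measurable
  have "(\<integral>\<^sup>+y. (\<integral>\<^sup>+s. ennreal (indicator {0<..} s * kk (real DIM('a)) s (norm (x - y))) \<partial>lborel)
            * ennreal ((1 + norm y) powr b) \<partial>lborel) = (\<integral>\<^sup>+y. (\<integral>\<^sup>+s. F s y \<partial>lborel) \<partial>lborel)"
  proof (intro nn_integral_cong)
    fix y :: 'a
    show "(\<integral>\<^sup>+s. ennreal (indicator {0<..} s * kk (real DIM('a)) s (norm (x - y))) \<partial>lborel)
            * ennreal ((1 + norm y) powr b) = (\<integral>\<^sup>+s. F s y \<partial>lborel)"
      unfolding F_def D_def
      by (subst nn_integral_multc[symmetric]) (auto simp: kk_def ennreal_mult[symmetric] kk_nonneg)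
  qed
  also have "\<dots> = (\<integral>\<^sup>+s. (\<integral>\<^sup>+y. F s y \<partial>lborel) \<partial>lborel)"
    by (rule pair_sigma_finite.Fubini'[OF pf Fm])
  also have "\<dots> \<le> (\<integral>\<^sup>+s. ennreal (pi powr (- real D / 2) * C * exp 1 * P) * (ennreal (exp (-s/2)) * indicator {0..} s) * Jb b ^ D \<partial>lborel)"
  proof (intro nn_integral_mono)
    fix s :: real
    show "(\<integral>\<^sup>+y. F s y \<partial>lborel) \<le> ennreal (pi powr (- real D / 2) * C * exp 1 * P) * (ennreal (exp (-s/2)) * indicator {0..} s) * Jb b ^ D"
    proof (cases "s > 0")
      case False
      hence "F s y = 0" for y unfolding F_def by simp
      thus ?thesis by simp
    next
      case True
      have q0: "0 \<le> 2 * sqrt s * (1 + 2 * sqrt s) powr b" using True by simp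
      have "(\<integral>\<^sup>+y. F s y \<partial>lborel) = (\<integral>\<^sup>+y. ennreal (exp (- s) * (4 * pi * s) powr (- real D / 2)) *
           ennreal (exp (-(norm (x - y))\<^sup>2 / (4 * s)) * (1 + norm y) powr b) \<partial>lborel)"
        unfolding F_def kk_def using True by (intro nn_integral_cong) (simp add: ennreal_mult[symmetric] mult.assoc)
      also have "\<dots> = ennreal (exp (- s) * (4 * pi * s) powr (- real D / 2)) *
           (\<integral>\<^sup>+y. ennreal (exp (-(norm (x - y))\<^sup>2 / (4 * s)) * (1 + norm y) powr b) \<partial>lborel)"
        by (intro nn_integral_cmult) measurable
      also have "\<dots> \<le> ennreal (exp (- s) * (4 * pi * s) powr (- real D / 2)) *
           (ennreal P * (ennreal (2 * sqrt s * (1 + 2 * sqrt s) powr b) * Jb b) ^ D)"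
        unfolding P_def D_def by (intro mult_left_mono gaussn True b) auto
      also have "\<dots> = ennreal (exp (- s) * (4 * pi * s) powr (- real D / 2) * P * (2 * sqrt s * (1 + 2 * sqrt s) powr b) ^ D) * Jb b ^ D"
        using P0 True ennr3[of "exp (- s) * (4 * pi * s) powr (- real D / 2)" P "(2 * sqrt s * (1 + 2 * sqrt s) powr b) ^ D" "Jb b ^ D"]
        by (simp only: power_mult_distrib[of "ennreal _" "Jb b"] ennreal_power[OF q0]) auto
      finally have I1: "(\<integral>\<^sup>+y. F s y \<partial>lborel) \<le> ennreal (exp (- s) * (4 * pi * s) powr (- real D / 2) * P * (2 * sqrt s * (1 + 2 * sqrt s) powr b) ^ D) * Jb b ^ D" .
      have eqX: "exp (- s) * (4 * pi * s) powr (- real D / 2) * P * (2 * sqrt s * (1 + 2 * sqrt s) powr b) ^ D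
          = pi powr (- real D / 2) * P * (exp (-s) * ((1 + 2 * sqrt s) powr b) ^ D)"
        using kfactor[OF True, of D] by (simp add: power_mult_distrib algebra_simps)
      have pw: "((1 + 2 * sqrt s) powr b) ^ D \<le> C * exp 1 * exp (s/2)"
      proof -
        have "((1 + 2 * sqrt s) powr b) ^ D = (1 + 2 * sqrt s) powr (b * real D)"
        proof -
          have "0 \<le> sqrt s" using True by simp
          hence h: "1 + 2 * sqrt s \<noteq> 0" by linarith
          hence "0 < (1 + 2 * sqrt s) powr b" by simp
          from powr_realpow[OF this, of D] show ?thesis by (simp add: powr_powr)
        qed
        also have "\<dots> \<le> (2 + s) powr (b * real D)"
        proof (intro powr_mono2)
          have "2 * sqrt s \<le> 1 + s" using True
          proof -
            have "0 \<le> (sqrt s - 1)\<^sup>2" by simp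
            also have "\<dots> = (sqrt s)\<^sup>2 - 2 * sqrt s + 1" by (simp add: power2_diff)
            also have "(sqrt s)\<^sup>2 = s" using True by simp
            finally show ?thesis by simp
          qed
          thus "1 + 2 * sqrt s \<le> 2 + s" by simp
        qed (use b True in auto)
        also have "\<dots> \<le> C * exp ((1/2) * (2 + s))" using C(2)[of "2+s"] True by simp
        also have "exp ((1/2) * (2 + s)) = exp 1 * exp (s/2)" by (simp add: exp_add[symmetric] algebra_simps)
        finally show ?thesis by simp
      qed
      have ee: "exp (-s) * exp (s/2) = exp (-s/2)"
      proof -
        have "-s/2 = -s + s/2" by simp
        thus ?thesis by (metis exp_add)
      qed
      have "pi powr (- real D / 2) * P * (exp (-s) * ((1 + 2 * sqrt s) powr b) ^ D)
          \<le> pi powr (- real D / 2) * P * (exp (-s) * (C * exp 1 * exp (s/2)))"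
        using P0 pw by (intro mult_left_mono) auto
      also have "\<dots> = pi powr (- real D / 2) * C * exp 1 * P * (exp (-s) * exp (s/2))" by (simp add: algebra_simps)
      also have "\<dots> = pi powr (- real D / 2) * C * exp 1 * P * exp (-s/2)" by (simp only: ee)
      finally have le0: "pi powr (- real D / 2) * P * (exp (-s) * ((1 + 2 * sqrt s) powr b) ^ D) \<le> pi powr (- real D / 2) * C * exp 1 * P * exp (-s/2)" .
      have le: "exp (- s) * (4 * pi * s) powr (- real D / 2) * P * (2 * sqrt s * (1 + 2 * sqrt s) powr b) ^ D \<le> pi powr (- real D / 2) * C * exp 1 * P * exp (-s/2)" unfolding eqX by (rule le0)
      have K0: "0 \<le> pi powr (- real D / 2) * C * exp 1 * P" using C(1) P0 by simp
      have "(\<integral>\<^sup>+y. F s y \<partial>lborel) \<le> ennreal (pi powr (- real D / 2) * C * exp 1 * P * exp (-s/2)) * Jb b ^ D"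
        using I1 le by (meson ennreal_leI mult_right_mono order_trans zero_le)
      also have "ennreal (pi powr (- real D / 2) * C * exp 1 * P * exp (-s/2)) = ennreal (pi powr (- real D / 2) * C * exp 1 * P) * (ennreal (exp (-s/2)) * indicator {0..} s)"
        using True K0 by (simp add: ennreal_mult)
      finally show ?thesis .
    qed
  qed
  also have "\<dots> = (\<integral>\<^sup>+s. ennreal (pi powr (- real D / 2) * C * exp 1 * P) * (ennreal (exp (-s/2)) * indicator {0..} s) \<partial>lborel) * Jb b ^ D"
    by (rule nn_integral_multc) simp
  also have "\<dots> = ennreal (pi powr (- real D / 2) * C * exp 1 * P) * 2 * Jb b ^ D"
    using cm exp_half_int by simp
  also have "\<dots> < \<infinity>" using Jb_finite[OF b]
    by (simp add: ennreal_mult_less_top power_less_top_ennreal)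
  finally show ?thesis .
qed



lemma Bker_kk: "Bker (z::real^'n) = (\<integral>s. indicator {0<..} s * kk (real CARD('n)) s (norm z) \<partial>lborel)"
  unfolding Bker_def kk_def set_lebesgue_integral_def by simp

lemma Bker_meas[measurable]: "(Bker :: real^'n \<Rightarrow> real) \<in> borel_measurable borel"
  unfolding Bker_kk kk_def by measurable

lemma Bker_nonneg: "0 \<le> Bker z"
  unfolding Bker_kk by (intro integral_nonneg_AE) (auto simp: kk_nonneg)

lemma Bker_nn: "Bker (z::real^'n) = enn2real (\<integral>\<^sup>+s. ennreal (indicator {0<..} s * kk (real CARD('n)) s (norm z)) \<partial>lborel)"
  unfolding Bker_kk by (rule integral_eq_nn_integral) (auto simp: kk_def)

lemma Bker_le_nn: "ennreal (Bker (z::real^'n)) \<le> (\<integral>\<^sup>+s. ennreal (indicator {0<..} s * kk (real CARD('n)) s (norm z)) \<partial>lborel)"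
proof (cases "(\<integral>\<^sup>+s. ennreal (indicator {0<..} s * kk (real CARD('n)) s (norm z)) \<partial>lborel) < \<infinity>")
  case True
  then show ?thesis unfolding Bker_nn by simp
next
  case False
  then show ?thesis by (simp add: less_top[symmetric])
qed

lemma Bker_weight_integrable:
  fixes x :: "real^'n" assumes b: "0 \<le> b"
  shows "integrable lborel (\<lambda>y. Bker (x - y) * (1 + norm y) powr b)"
proof (rule integrableI_nonneg)
  show "(\<lambda>y. Bker (x - y) * (1 + norm y) powr b) \<in> borel_measurable lborel" by measurable
  show "AE y in lborel. 0 \<le> Bker (x - y) * (1 + norm y) powr b" by (simp add: Bker_nonneg)
  have "(\<integral>\<^sup>+y. ennreal (Bker (x - y) * (1 + norm y) powr b) \<partial>lborel) \<le>
     (\<integral>\<^sup>+y. (\<integral>\<^sup>+s. ennreal (indicator {0<..} s * kk (real DIM(real^'n)) s (norm (x - y))) \<partial>lborel)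
            * ennreal ((1 + norm y) powr b) \<partial>lborel)"
    by (intro nn_integral_mono) (simp add: ennreal_mult Bker_nonneg mult_right_mono Bker_le_nn)
  also have "\<dots> < \<infinity>" by (rule weight_fin[OF b])
  finally show "(\<integral>\<^sup>+y. ennreal (Bker (x - y) * (1 + norm y) powr b) \<partial>lborel) < \<infinity>" .
qed

lemma Bker_phi_integrable:
  fixes x :: "real^'n" and \<phi> :: "real^'n \<Rightarrow> real"
  assumes b: "0 \<le> b" and m: "\<phi> \<in> borel_measurable lborel" and bd: "\<And>y. \<bar>\<phi> y\<bar> \<le> M * (1 + norm y) powr b"
  shows "integrable lborel (\<lambda>y. Bker (x - y) * \<phi> y)"
proof (rule Bochner_Integration.integrable_bound[where f="\<lambda>y. M * (Bker (x - y) * (1 + norm y) powr b)"])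
  show "integrable lborel (\<lambda>y. M * (Bker (x - y) * (1 + norm y) powr b))"
    by (intro integrable_mult_right Bker_weight_integrable b)
  show "(\<lambda>y. Bker (x - y) * \<phi> y) \<in> borel_measurable lborel" using m by measurable
  show "AE y in lborel. norm (Bker (x - y) * \<phi> y) \<le> norm (M * (Bker (x - y) * (1 + norm y) powr b))"
  proof (intro AE_I2)
    fix y
    have "\<bar>Bker (x - y) * \<phi> y\<bar> = Bker (x - y) * \<bar>\<phi> y\<bar>" by (simp add: abs_mult Bker_nonneg)
    also have "\<dots> \<le> Bker (x - y) * (M * (1 + norm y) powr b)" by (intro mult_left_mono bd Bker_nonneg)
    also have "\<dots> \<le> \<bar>M * (Bker (x - y) * (1 + norm y) powr b)\<bar>" by (simp add: algebra_simps)
    finally show "norm (Bker (x - y) * \<phi> y) \<le> norm (M * (Bker (x - y) * (1 + norm y) powr b))" by simp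
  qed
qed

lemma kk_upper:
  assumes r: "0 < r" and d: "0 \<le> d"
  shows "\<exists>K. \<forall>s>0. kk d s r \<le> K * exp (- s)"
proof -
  obtain C1 where C1: "C1 > 0" "\<And>y. y \<ge> 0 \<Longrightarrow> y powr (d/2) \<le> C1 * exp (r\<^sup>2/4 * y)"
    using poly_exp_bound[of "d/2" "r\<^sup>2/4"] r d by auto
  show ?thesis
  proof (intro exI[of _ "(4 * pi) powr (- d / 2) * C1"] allI impI)
    fix s :: real assume s: "s > 0"
    have "s powr (- d / 2) = (1/s) powr (d/2)" using s
      by (simp add: powr_minus_divide powr_divide)
    also have "\<dots> \<le> C1 * exp (r\<^sup>2/4 * (1/s))" using C1(2)[of "1/s"] s by simp
    finally have "s powr (- d / 2) * exp (- r\<^sup>2 / (4 * s)) \<le> C1 * exp (r\<^sup>2/4 * (1/s)) * exp (- r\<^sup>2 / (4 * s))"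
      by (intro mult_right_mono) auto
    also have "\<dots> = C1 * (exp (r\<^sup>2/4 * (1/s)) * exp (- r\<^sup>2 / (4 * s)))" by simp
    also have "exp (r\<^sup>2/4 * (1/s)) * exp (- r\<^sup>2 / (4 * s)) = 1"
      by (simp add: exp_minus_inverse)
    finally have a: "s powr (- d / 2) * exp (- r\<^sup>2 / (4 * s)) \<le> C1" by simp
    have "kk d s r = exp (- s) * (4 * pi) powr (- d / 2) * (s powr (- d / 2) * exp (- r\<^sup>2 / (4 * s)))"
      unfolding kk_def using s by (simp add: powr_mult)
    also have "\<dots> \<le> exp (- s) * (4 * pi) powr (- d / 2) * C1" by (intro mult_left_mono a) auto
    finally show "kk d s r \<le> (4 * pi) powr (- d / 2) * C1 * exp (- s)" by (simp add: algebra_simps)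
  qed
qed

lemma kk_lower:
  assumes r: "0 < r" and d: "0 \<le> d" and s: "(r+1)/2 \<le> s" "s \<le> (r+2)/2"
  shows "exp (- r - 1) * (2 * pi * (r + 2)) powr (- d / 2) \<le> kk d s r"
proof -
  have s0: "s > 0" using r s by simp
  have e1: "exp (-(r+2)/2) \<le> exp (- s)" using s by simp
  have "r\<^sup>2 / (4 * s) \<le> r / 2"
  proof -
    have "r\<^sup>2 \<le> 2 * r * s" using s r by (simp add: power2_eq_square)
    thus ?thesis using s0 by (simp add: field_simps)
  qed
  hence e2: "exp (- r / 2) \<le> exp (- r\<^sup>2 / (4 * s))" by simp
  have p: "(2 * pi * (r + 2)) powr (- d / 2) \<le> (4 * pi * s) powr (- d / 2)"
    using s0 s d by (intro powr_mono2') auto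
  have "exp (-(r+2)/2) * (2 * pi * (r + 2)) powr (- d / 2) * exp (- r / 2) \<le> kk d s r"
    unfolding kk_def using e1 e2 p by (intro mult_mono) auto
  moreover have "exp (-(r+2)/2) * (2 * pi * (r + 2)) powr (- d / 2) * exp (- r / 2) = 
     exp (- r - 1) * (2 * pi * (r + 2)) powr (- d / 2)"
  proof -
    have "exp (-(r+2)/2) * exp (- r / 2) = exp (- r - 1)" by (simp add: mult_exp_exp field_simps)
    thus ?thesis by (metis mult.commute mult.left_commute)
  qed
  ultimately show ?thesis by metis
qed

lemma Bker_lower_r:
  fixes z :: "real^'n" assumes z: "z \<noteq> 0"
  shows "exp (- norm z - 1) * (2 * pi * (norm z + 2)) powr (- real CARD('n) / 2) / 2 \<le> Bker z"
proof -
  define r where "r = norm z"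
  define d where "d = real CARD('n)"
  have r: "r > 0" using z unfolding r_def by simp
  have d: "d \<ge> 0" unfolding d_def by simp
  define L where "L = exp (- r - 1) * (2 * pi * (r + 2)) powr (- d / 2)"
  have L0: "L \<ge> 0" unfolding L_def by simp
  define I where "I = (\<integral>\<^sup>+s. ennreal (indicator {0<..} s * kk d s r) \<partial>lborel)"
  obtain K where K: "\<And>s. s > 0 \<Longrightarrow> kk d s r \<le> K * exp (- s)" using kk_upper[OF r d] by auto
  have "I \<le> (\<integral>\<^sup>+s. ennreal K * (ennreal (exp (- s)) * indicator {0..} s) \<partial>lborel)"
    unfolding I_def
  proof (intro nn_integral_mono)
    fix s :: real
    show "ennreal (indicator {0<..} s * kk d s r) \<le> ennreal K * (ennreal (exp (- s)) * indicator {0..} s)"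
    proof (cases "s > 0")
      case True
      have "0 \<le> kk d s r" by (rule kk_nonneg)
      hence "0 \<le> K * exp (- s)" using K[OF True] by linarith
      hence "K \<ge> 0" by (simp add: zero_le_mult_iff)
      thus ?thesis using True K[OF True] by (simp add: ennreal_mult[symmetric] ennreal_leI)
    qed simp
  qed
  also have "\<dots> = ennreal K * 1"
    by (subst nn_integral_cmult) (simp_all add: exp_neg_int)
  finally have "I \<le> ennreal K" by simp
  hence Ifin: "I < top" using ennreal_less_top[of K] by (rule order.strict_trans1)
  have "ennreal (L / 2) = (\<integral>\<^sup>+s. ennreal L * indicator {(r+1)/2..(r+2)/2} s \<partial>lborel)"
  proof -
    have "(\<integral>\<^sup>+s. ennreal L * indicator {(r+1)/2..(r+2)/2} s \<partial>lborel) = ennreal L * emeasure lborel {(r+1)/2..(r+2)/2}"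
      by (rule nn_integral_cmult_indicator) simp
    also have "emeasure lborel {(r+1)/2..(r+2)/2} = ennreal (1/2)"
      using emeasure_lborel_Icc[of "(r+1)/2" "(r+2)/2"] by (simp add: field_simps)
    also have "ennreal L * ennreal (1/2) = ennreal (L / 2)" using L0 ennreal_mult[of L "1/2"] by (simp del: ennreal_half add: field_simps)
    finally show ?thesis by simp
  qed
  also have "\<dots> \<le> I"
    unfolding I_def
  proof (intro nn_integral_mono)
    fix s :: real
    show "ennreal L * indicator {(r+1)/2..(r+2)/2} s \<le> ennreal (indicator {0<..} s * kk d s r)"
    proof (cases "s \<in> {(r+1)/2..(r+2)/2}")
      case True
      hence "s > 0" using r by auto
      thus ?thesis using True kk_lower[OF r d, of s] unfolding L_def by (auto intro: ennreal_leI)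
    qed simp
  qed
  finally have le: "ennreal (L / 2) \<le> I" .
  have "L / 2 \<le> enn2real I" using enn2real_mono[OF le Ifin] L0 by simp
  also have "enn2real I = Bker z" unfolding Bker_nn I_def r_def d_def ..
  finally show ?thesis unfolding L_def r_def d_def .
qed

lemma Bker_lower:
  assumes de: "\<delta> > 1"
  shows "\<exists>\<kappa>>0. \<forall>z::real^'n. z \<noteq> 0 \<longrightarrow> \<kappa> * exp (- \<delta> * norm z) \<le> Bker z"
proof -
  define d where "d = real CARD('n)"
  obtain C where C: "C > 0" "\<And>y. y \<ge> 0 \<Longrightarrow> y powr (d/2) \<le> C * exp ((\<delta> - 1) / (2 * pi) * y)"
    using poly_exp_bound[of "d/2" "(\<delta> - 1) / (2 * pi)"] de unfolding d_def by auto
  show ?thesis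
  proof (intro exI[of _ "exp (1 - 2 * \<delta>) / (2 * C)"] conjI allI impI)
    show "exp (1 - 2 * \<delta>) / (2 * C) > 0" using C by simp
    fix z :: "real^'n" assume z: "z \<noteq> 0"
    define r where "r = norm z"
    have r: "r \<ge> 0" unfolding r_def by simp
    define y where "y = 2 * pi * (r + 2)"
    have y: "y > 0" unfolding y_def using r by (simp add: add_nonneg_pos pi_gt_zero)
    have "y powr (d/2) \<le> C * exp ((\<delta> - 1) / (2 * pi) * y)" using C(2) y by simp
    also have "(\<delta> - 1) / (2 * pi) * y = (\<delta> - 1) * (r + 2)" unfolding y_def by simp
    finally have yb: "y powr (d/2) \<le> C * exp ((\<delta> - 1) * (r + 2))" .
    have "y powr (- d / 2) = 1 / y powr (d/2)" by (simp add: powr_minus_divide)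
    also have "\<dots> \<ge> 1 / (C * exp ((\<delta> - 1) * (r + 2)))"
      using yb y C(1) by (intro divide_left_mono) auto
    finally have yl: "1 / (C * exp ((\<delta> - 1) * (r + 2))) \<le> y powr (- d / 2)" .
    have "exp (1 - 2 * \<delta>) / (2 * C) * exp (- \<delta> * r) = exp (- r - 1) * (1 / (C * exp ((\<delta> - 1) * (r + 2)))) / 2"
    proof -
      have "exp (1 - 2 * \<delta>) * exp (- \<delta> * r) = exp (- r - 1) / exp ((\<delta> - 1) * (r + 2))"
      proof -
        have "exp (1 - 2 * \<delta>) * exp (- \<delta> * r) = exp ((1 - 2 * \<delta>) + (- \<delta> * r))" by (rule mult_exp_exp)
        also have "(1 - 2 * \<delta>) + (- \<delta> * r) = (- r - 1) - (\<delta> - 1) * (r + 2)" by (simp add: algebra_simps)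
        also have "exp \<dots> = exp (- r - 1) / exp ((\<delta> - 1) * (r + 2))" by (rule exp_diff)
        finally show ?thesis .
      qed
      thus ?thesis using C(1) by (simp add: field_simps)
    qed
    also have "\<dots> \<le> exp (- r - 1) * y powr (- d / 2) / 2"
      using yl by (intro divide_right_mono mult_left_mono) auto
    also have "\<dots> \<le> Bker z" using Bker_lower_r[OF z] unfolding y_def r_def d_def by simp
    finally show "exp (1 - 2 * \<delta>) / (2 * C) * exp (- \<delta> * norm z) \<le> Bker z" unfolding r_def .
  qed
qed



lemma BC_growth:
  fixes \<phi> :: "real^'n \<Rightarrow> real"
  assumes "\<phi> \<in> BC a"
  shows "\<exists>M. \<forall>y. \<bar>\<phi> y\<bar> \<le> M * (1 + norm y) powr \<bar>a\<bar>"
proof -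
  from assms obtain C R where cont: "continuous_on UNIV \<phi>"
    and CR: "\<And>x. R \<le> norm x \<Longrightarrow> \<bar>\<phi> x\<bar> \<le> C * norm x powr a"
    unfolding BC_def by auto
  define R' where "R' = max R 1"
  have "bounded (\<phi> ` cball 0 R')"
    by (intro compact_imp_bounded compact_continuous_image continuous_on_subset[OF cont]) auto
  then obtain B where B: "\<And>y. y \<in> cball 0 R' \<Longrightarrow> \<bar>\<phi> y\<bar> \<le> B"
    unfolding bounded_iff by fastforce
  show ?thesis
  proof (intro exI[of _ "\<bar>B\<bar> + \<bar>C\<bar>"] allI)
    fix y :: "real^'n"
    have w1: "1 \<le> (1 + norm y) powr \<bar>a\<bar>" by (intro ge_one_powr_ge_zero) auto
    show "\<bar>\<phi> y\<bar> \<le> (\<bar>B\<bar> + \<bar>C\<bar>) * (1 + norm y) powr \<bar>a\<bar>"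
    proof (cases "norm y \<le> R'")
      case True
      hence "\<bar>\<phi> y\<bar> \<le> B" using B by simp
      also have "B \<le> (\<bar>B\<bar> + \<bar>C\<bar>) * 1" by simp
      also have "\<dots> \<le> (\<bar>B\<bar> + \<bar>C\<bar>) * (1 + norm y) powr \<bar>a\<bar>" by (intro mult_left_mono w1) auto
      finally show ?thesis .
    next
      case False
      hence y1: "1 \<le> norm y" "R \<le> norm y" unfolding R'_def by auto
      have "\<bar>\<phi> y\<bar> \<le> C * norm y powr a" using CR y1 by simp
      also have "\<dots> \<le> \<bar>C\<bar> * norm y powr a" by (intro mult_right_mono) auto
      also have "norm y powr a \<le> norm y powr \<bar>a\<bar>" using y1 by (intro powr_mono) auto
      hence "\<bar>C\<bar> * norm y powr a \<le> \<bar>C\<bar> * norm y powr \<bar>a\<bar>" by (intro mult_left_mono) auto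
      also have "norm y powr \<bar>a\<bar> \<le> (1 + norm y) powr \<bar>a\<bar>" by (intro powr_mono2) auto
      hence "\<bar>C\<bar> * norm y powr \<bar>a\<bar> \<le> \<bar>C\<bar> * (1 + norm y) powr \<bar>a\<bar>" by (intro mult_left_mono) auto
      also have "\<dots> \<le> (\<bar>B\<bar> + \<bar>C\<bar>) * (1 + norm y) powr \<bar>a\<bar>" by (intro mult_right_mono) auto
      finally show ?thesis .
    qed
  qed
qed

lemma BC_integrable:
  fixes \<phi> :: "real^'n \<Rightarrow> real"
  assumes "\<phi> \<in> BC a"
  shows "integrable lborel (\<lambda>y. Bker (x - y) * \<phi> y)"
proof -
  obtain M where M: "\<And>y. \<bar>\<phi> y\<bar> \<le> M * (1 + norm y) powr \<bar>a\<bar>" using BC_growth[OF assms] by auto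
  have "continuous_on UNIV \<phi>" using assms unfolding BC_def by auto
  hence m: "\<phi> \<in> borel_measurable lborel" by (simp add: borel_measurable_continuous_onI)
  show ?thesis by (rule Bker_phi_integrable[OF _ m M]) simp
qed

lemma Bop_lower:
  fixes \<phi> :: "real^'n \<Rightarrow> real" and x x0 :: "real^'n"
  assumes \<kappa>: "\<kappa> > 0" "\<And>z::real^'n. z \<noteq> 0 \<Longrightarrow> \<kappa> * exp (- \<delta> * norm z) \<le> Bker z"
    and de: "\<delta> > 0" and \<eta>: "\<eta> > 0" and r: "0 < r" "r \<le> 1"
    and ball: "\<And>y. y \<in> ball x0 r \<Longrightarrow> \<eta> / 2 \<le> \<phi> y"
    and nn: "\<And>y. 0 \<le> \<phi> y"
    and int: "integrable lborel (\<lambda>y. Bker (x - y) * \<phi> y)"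
  shows "(\<eta> / 2) * \<kappa> * exp (- \<delta> * (norm x0 + 1)) * measure lborel (ball x0 r) * exp (- \<delta> * norm x) \<le> Bop \<phi> x"
proof -
  define K where "K = (\<eta> / 2) * \<kappa> * exp (- \<delta> * (norm x + norm x0 + 1))"
  have K0: "0 \<le> K" unfolding K_def using \<eta> \<kappa> by simp
  have "(\<integral>y. indicator (ball x0 r) y * K \<partial>lborel) \<le> (\<integral>y. Bker (x - y) * \<phi> y \<partial>lborel)"
  proof (rule integral_mono_AE)
    show "integrable lborel (\<lambda>y. indicator (ball x0 r) y * K)"
      by (intro integrable_mult_left integrable_real_indicator) (use emeasure_lborel_ball_finite[of x0 r] in \<open>auto simp: infinity_ennreal_def\<close>)
    show "integrable lborel (\<lambda>y. Bker (x - y) * \<phi> y)" by (rule int)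
    show "AE y in lborel. indicator (ball x0 r) y * K \<le> Bker (x - y) * \<phi> y"
      using AE_lborel_singleton[of x]
    proof (eventually_elim)
      case (elim y)
      show ?case
      proof (cases "y \<in> ball x0 r")
        case True
        have "norm (x - y) \<le> norm x + norm y" by (rule norm_triangle_ineq4)
        also have "norm y \<le> norm x0 + dist x0 y" by (metis dist_norm norm_triangle_sub add.commute norm_minus_commute)
        hence "norm y \<le> norm x0 + 1" using True r by (simp add: dist_commute)
        finally have nx: "norm (x - y) \<le> norm x + norm x0 + 1" by simp
        have "\<kappa> * exp (- \<delta> * (norm x + norm x0 + 1)) \<le> \<kappa> * exp (- \<delta> * norm (x - y))"
          using nx de \<kappa>(1) by (intro mult_left_mono) auto
        also have "\<dots> \<le> Bker (x - y)" using \<kappa>(2)[of "x - y"] elim by simp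
        finally have b1: "\<kappa> * exp (- \<delta> * (norm x + norm x0 + 1)) \<le> Bker (x - y)" .
        have "K = (\<kappa> * exp (- \<delta> * (norm x + norm x0 + 1))) * (\<eta> / 2)" unfolding K_def by simp
        also have "\<dots> \<le> Bker (x - y) * \<phi> y"
          using b1 ball[OF True] \<eta> \<kappa>(1) by (intro mult_mono) (auto simp: Bker_nonneg)
        finally show ?thesis using True by simp
      next
        case False
        thus ?thesis using nn by (simp add: Bker_nonneg)
      qed
    qed
  qed
  also have "(\<integral>y. indicator (ball x0 r) y * K \<partial>lborel) = measure lborel (ball x0 r) * K" by simp
  also have "(\<integral>y. Bker (x - y) * \<phi> y \<partial>lborel) = Bop \<phi> x" unfolding Bop_def ..
  also have "measure lborel (ball x0 r) * K = (\<eta> / 2) * \<kappa> * exp (- \<delta> * (norm x0 + 1)) * measure lborel (ball x0 r) * exp (- \<delta> * norm x)"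
  proof -
    have "exp (- \<delta> * (norm x + norm x0 + 1)) = exp (- \<delta> * (norm x0 + 1)) * exp (- \<delta> * norm x)"
      by (simp add: mult_exp_exp algebra_simps)
    thus ?thesis unfolding K_def by simp
  qed
  finally show ?thesis by simp
qed

lemma weight_a_integrable:
  fixes x :: "real^'n"
  shows "integrable lborel (\<lambda>y. Bker (x - y) * (1 + norm y) powr a)"
proof (rule Bker_phi_integrable[of "\<bar>a\<bar>" _ 1])
  show "(\<lambda>y::real^'n. (1 + norm y) powr a) \<in> borel_measurable lborel" by measurable
  fix y :: "real^'n"
  have "(1 + norm y) powr a \<le> (1 + norm y) powr \<bar>a\<bar>" by (intro powr_mono) auto
  thus "\<bar>(1 + norm y) powr a\<bar> \<le> 1 * (1 + norm y) powr \<bar>a\<bar>" by simp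
qed simp

lemma tau_cont:
  fixes \<mu> :: "real^'n \<Rightarrow> real \<Rightarrow> real"
  assumes Z: "\<mu> \<in> Z T a" and t0: "ereal t0 < T"
  shows "continuous_on {0..t0} (\<lambda>\<tau>. Bop (\<lambda>y. \<mu> y \<tau>) x)"
  unfolding continuous_on_iff
proof (intro ballI allI impI)
  fix t e :: real assume t: "t \<in> {0..t0}" and e: "e > 0"
  have sub: "{0..t0} \<subseteq> Tset T" unfolding Tset_def using t0
    by (auto intro: le_less_trans[of _ "ereal t0"])
  have tT: "t \<in> Tset T" using t sub by auto
  define IW where "IW = (\<integral>y. Bker (x - y) * (1 + norm y) powr a \<partial>lborel)"
  have IW0: "0 \<le> IW" unfolding IW_def by (intro integral_nonneg_AE) (auto simp: Bker_nonneg)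
  define \<epsilon> where "\<epsilon> = e / (IW + 1)"
  have \<epsilon>0: "\<epsilon> > 0" unfolding \<epsilon>_def using e IW0 by simp
  from Z tT \<epsilon>0 obtain d where d: "d > 0"
    and dd: "\<And>s y. s \<in> Tset T \<Longrightarrow> \<bar>s - t\<bar> < d \<Longrightarrow> \<bar>\<mu> y s - \<mu> y t\<bar> \<le> \<epsilon> * (1 + norm y) powr a"
    unfolding Z_def by blast
  have BC: "\<And>s. s \<in> Tset T \<Longrightarrow> (\<lambda>y. \<mu> y s) \<in> BC a" using Z unfolding Z_def by blast
  show "\<exists>d>0. \<forall>s\<in>{0..t0}. dist s t < d \<longrightarrow> dist (Bop (\<lambda>y. \<mu> y s) x) (Bop (\<lambda>y. \<mu> y t) x) < e"
  proof (intro exI[of _ d] conjI ballI impI d)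
    fix s assume s: "s \<in> {0..t0}" and ds: "dist s t < d"
    have sT: "s \<in> Tset T" using s sub by auto
    have i1: "integrable lborel (\<lambda>y. Bker (x - y) * \<mu> y s)" by (rule BC_integrable[OF BC[OF sT]])
    have i2: "integrable lborel (\<lambda>y. Bker (x - y) * \<mu> y t)" by (rule BC_integrable[OF BC[OF tT]])
    have "Bop (\<lambda>y. \<mu> y s) x - Bop (\<lambda>y. \<mu> y t) x = (\<integral>y. Bker (x - y) * \<mu> y s - Bker (x - y) * \<mu> y t \<partial>lborel)"
      unfolding Bop_def using i1 i2 by simp
    also have "\<bar>\<dots>\<bar> \<le> (\<integral>y. \<epsilon> * (Bker (x - y) * (1 + norm y) powr a) \<partial>lborel)"
    proof (rule integral_abs_bound_integral)
      show "integrable lborel (\<lambda>y. Bker (x - y) * \<mu> y s - Bker (x - y) * \<mu> y t)" using i1 i2 by simp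
      show "integrable lborel (\<lambda>y. \<epsilon> * (Bker (x - y) * (1 + norm y) powr a))"
        by (intro integrable_mult_right weight_a_integrable)
      fix y :: "real^'n"
      have "\<bar>Bker (x - y) * \<mu> y s - Bker (x - y) * \<mu> y t\<bar> = Bker (x - y) * \<bar>\<mu> y s - \<mu> y t\<bar>"
        by (simp add: right_diff_distrib[symmetric] abs_mult Bker_nonneg)
      also have "\<dots> \<le> Bker (x - y) * (\<epsilon> * (1 + norm y) powr a)"
        using dd[OF sT, of y] ds by (intro mult_left_mono) (auto simp: dist_real_def Bker_nonneg)
      finally show "\<bar>Bker (x - y) * \<mu> y s - Bker (x - y) * \<mu> y t\<bar> \<le> \<epsilon> * (Bker (x - y) * (1 + norm y) powr a)"
        by (simp add: algebra_simps)
    qed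
    also have "\<dots> = \<epsilon> * IW" unfolding IW_def by simp
    also have "\<dots> < e" unfolding \<epsilon>_def using e IW0 by (simp add: field_simps)
    finally show "dist (Bop (\<lambda>y. \<mu> y s) x) (Bop (\<lambda>y. \<mu> y t) x) < e" by (simp add: dist_real_def)
  qed
qed

lemma Bop_nonneg: "(\<And>y. 0 \<le> \<phi> y) \<Longrightarrow> 0 \<le> Bop \<phi> x"
  unfolding Bop_def by (intro integral_nonneg_AE) (auto simp: Bker_nonneg)

lemma set_int_nonneg: "(\<And>t. t \<in> A \<Longrightarrow> 0 \<le> f t) \<Longrightarrow> 0 \<le> (LINT t:A|lborel. (f t :: real))"
  unfolding set_lebesgue_integral_def by (intro integral_nonneg_AE) (auto simp: indicator_def)

lemma part1:
  fixes T :: ereal and u0 :: "real^'n \<Rightarrow> real" and \<mu> :: "real^'n \<Rightarrow> real \<Rightarrow> real"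
  assumes \<kappa>: "\<kappa> > 0" "\<And>z::real^'n. z \<noteq> 0 \<Longrightarrow> \<kappa> * exp (- \<delta> * norm z) \<le> Bker z"
    and de: "\<delta> > 0" and \<eta>: "\<eta> > 0" and r: "0 < r" "r \<le> 1"
    and ball: "\<And>y. y \<in> ball x0 r \<Longrightarrow> \<eta> / 2 \<le> u0 y"
    and t0: "0 < t0" "ereal t0 < T"
    and Z: "\<mu> \<in> Z T a" and nn: "\<forall>x. \<forall>t\<in>Tset T. 0 \<le> \<mu> x t"
    and hyp: "\<forall>x. \<forall>t\<in>Tset T. \<mu> x t \<ge> u0 x + (LINT \<tau>:{0..t}|lborel. Bop (\<lambda>y. \<mu> y \<tau>) x)"
  shows "t0 * ((\<eta> / 2) * \<kappa> * exp (- \<delta> * (norm x0 + 1)) * measure lborel (ball x0 r)) * exp (- \<delta> * norm x)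
     \<le> (LINT \<tau>:{0..t0}|lborel. Bop (\<lambda>y. \<mu> y \<tau>) x)"
proof -
  define c where "c = (\<eta> / 2) * \<kappa> * exp (- \<delta> * (norm x0 + 1)) * measure lborel (ball x0 r)"
  have sub: "{0..t0} \<subseteq> Tset T" unfolding Tset_def using t0
    by (auto intro: le_less_trans[of _ "ereal t0"])
  have low: "c * exp (- \<delta> * norm x) \<le> Bop (\<lambda>y. \<mu> y \<tau>) x" if \<tau>: "\<tau> \<in> {0..t0}" for \<tau>
  proof -
    have \<tau>T: "\<tau> \<in> Tset T" using \<tau> sub by auto
    have ge: "u0 y \<le> \<mu> y \<tau>" for y
    proof -
      have "0 \<le> (LINT \<tau>':{0..\<tau>}|lborel. Bop (\<lambda>y. \<mu> y \<tau>') y)"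
      proof (intro set_int_nonneg Bop_nonneg)
        fix t y assume "t \<in> {0..\<tau>}"
        hence "t \<in> Tset T" using \<tau>T unfolding Tset_def by (auto intro: le_less_trans[of _ "ereal \<tau>"])
        thus "0 \<le> \<mu> y t" using nn by auto
      qed
      moreover have "u0 y + (LINT \<tau>':{0..\<tau>}|lborel. Bop (\<lambda>y. \<mu> y \<tau>') y) \<le> \<mu> y \<tau>"
        using hyp \<tau>T by blast
      ultimately show ?thesis by linarith
    qed
    have BC: "(\<lambda>y. \<mu> y \<tau>) \<in> BC a" using Z \<tau>T unfolding Z_def by blast
    show ?thesis unfolding c_def
    proof (rule Bop_lower[OF \<kappa> de \<eta> r])
      show "\<eta> / 2 \<le> \<mu> y \<tau>" if "y \<in> ball x0 r" for y using ball[OF that] ge[of y] by simp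
      show "0 \<le> \<mu> y \<tau>" for y using nn \<tau>T by auto
      show "integrable lborel (\<lambda>y. Bker (x - y) * \<mu> y \<tau>)" by (rule BC_integrable[OF BC])
    qed
  qed
  have "(LINT \<tau>:{0..t0}|lborel. c * exp (- \<delta> * norm x)) \<le> (LINT \<tau>:{0..t0}|lborel. Bop (\<lambda>y. \<mu> y \<tau>) x)"
  proof (rule set_integral_mono)
    show "set_integrable lborel {0..t0} (\<lambda>\<tau>. c * exp (- \<delta> * norm x))"
      by (intro borel_integrable_atLeastAtMost') auto
    show "set_integrable lborel {0..t0} (\<lambda>\<tau>. Bop (\<lambda>y. \<mu> y \<tau>) x)"
      by (intro borel_integrable_atLeastAtMost' tau_cont[OF Z t0(2)])
  qed (rule low)
  also have "(LINT \<tau>:{0..t0}|lborel. c * exp (- \<delta> * norm x)) = t0 * c * exp (- \<delta> * norm x)"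
    using t0 by (subst set_integral_const) auto
  finally show ?thesis unfolding c_def by simp
qed

theorem mainTheorem13:
  fixes T :: ereal and u0 :: "real^'n \<Rightarrow> real"
  assumes "0 < T"
    and "continuous_on UNIV u0" and "\<forall>x. 0 \<le> u0 x" and "\<exists>x. u0 x \<noteq> 0"
  shows "\<forall>\<delta>>1. \<forall>t0. 0 < t0 \<and> ereal t0 < T \<longrightarrow>
    (\<exists>C0>0.
      (\<forall>a \<mu>. \<mu> \<in> Z T a \<and> (\<forall>x. \<forall>t\<in>Tset T. 0 \<le> \<mu> x t) \<and>
          (\<forall>x. \<forall>t\<in>Tset T. \<mu> x t \<ge> u0 x + (LINT \<tau>:{0..t}|lborel. Bop (\<lambda>y. \<mu> y \<tau>) x))
        \<longrightarrow> (\<forall>x. (LINT \<tau>:{0..t0}|lborel. Bop (\<lambda>y. \<mu> y \<tau>) x) \<ge> C0 * exp (- \<delta> * norm x)))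
      \<and>
      (\<forall>p V a u. 0 < p \<and> p < 1 \<and> continuous_on UNIV V \<and> (\<forall>x. 0 \<le> V x) \<and>
          (\<forall>x. \<forall>t\<in>Tset T. 0 \<le> u x t) \<and> s_supersol p V u0 T a u
        \<longrightarrow> (\<forall>x.
              exp t0 * u x t0 \<ge> u0 x
                + (LINT \<tau>:{0..t0}|lborel. Bop (\<lambda>y. exp \<tau> * u y \<tau>) x)
                + (LINT \<tau>:{0..t0}|lborel. exp ((1 - p) * \<tau>) *
                     Bop (\<lambda>y. V y * (exp \<tau> * u y \<tau>) powr p) x)
            \<and> u0 x
                + (LINT \<tau>:{0..t0}|lborel. Bop (\<lambda>y. exp \<tau> * u y \<tau>) x)
                + (LINT \<tau>:{0..t0}|lborel. exp ((1 - p) * \<tau>) *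
                     Bop (\<lambda>y. V y * (exp \<tau> * u y \<tau>) powr p) x)
              \<ge> C0 * exp (- \<delta> * norm x))))"
proof (intro allI impI)
  fix \<delta> t0 :: real
  assume \<delta>: "\<delta> > 1" and t0: "0 < t0 \<and> ereal t0 < T"
  from assms(4) obtain x0 where x0: "u0 x0 \<noteq> 0" by auto
  define \<eta> where "\<eta> = u0 x0"
  have \<eta>: "\<eta> > 0" using x0 assms(3) unfolding \<eta>_def by (metis less_eq_real_def)
  from assms(2) \<eta> obtain r where r: "r > 0" and rr: "\<And>y. dist y x0 < r \<Longrightarrow> dist (u0 y) (u0 x0) < \<eta> / 2"
    unfolding continuous_on_iff by (metis UNIV_I half_gt_zero)
  define r' where "r' = min r 1"
  have r': "0 < r'" "r' \<le> 1" unfolding r'_def using r by auto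
  have ballu: "\<eta> / 2 \<le> u0 y" if "y \<in> ball x0 r'" for y
  proof -
    have "dist y x0 < r" using that unfolding r'_def by (simp add: dist_commute)
    hence "\<bar>u0 y - \<eta>\<bar> < \<eta> / 2" using rr unfolding \<eta>_def dist_real_def by simp
    thus ?thesis by linarith
  qed
  obtain \<kappa> where \<kappa>: "\<kappa> > 0" "\<And>z::real^'n. z \<noteq> 0 \<longrightarrow> \<kappa> * exp (- \<delta> * norm z) \<le> Bker z"
    using Bker_lower[OF \<delta>] by blast
  define c where "c = (\<eta> / 2) * \<kappa> * exp (- \<delta> * (norm x0 + 1)) * measure lborel (ball x0 r')"
  have c: "c > 0" unfolding c_def using \<eta> \<kappa> content_ball_pos[OF r'(1), of x0] by simp
  have de: "\<delta> > 0" using \<delta> by simp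
  have P1: "\<forall>x. (LINT \<tau>:{0..t0}|lborel. Bop (\<lambda>y. \<mu> y \<tau>) x) \<ge> (t0 * c) * exp (- \<delta> * norm x)"
    if Z: "\<mu> \<in> Z T a" and nn: "\<forall>x. \<forall>t\<in>Tset T. 0 \<le> \<mu> x t"
      and hyp: "\<forall>x. \<forall>t\<in>Tset T. \<mu> x t \<ge> u0 x + (LINT \<tau>:{0..t}|lborel. Bop (\<lambda>y. \<mu> y \<tau>) x)"
    for a \<mu>
    using part1[OF \<kappa>(1) _ de \<eta> r' ballu _ _ Z nn hyp] \<kappa>(2) t0 unfolding c_def by auto
  show "\<exists>C0>0.
      (\<forall>a \<mu>. \<mu> \<in> Z T a \<and> (\<forall>x. \<forall>t\<in>Tset T. 0 \<le> \<mu> x t) \<and>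
          (\<forall>x. \<forall>t\<in>Tset T. \<mu> x t \<ge> u0 x + (LINT \<tau>:{0..t}|lborel. Bop (\<lambda>y. \<mu> y \<tau>) x))
        \<longrightarrow> (\<forall>x. (LINT \<tau>:{0..t0}|lborel. Bop (\<lambda>y. \<mu> y \<tau>) x) \<ge> C0 * exp (- \<delta> * norm x)))
      \<and>
      (\<forall>p V a u. 0 < p \<and> p < 1 \<and> continuous_on UNIV V \<and> (\<forall>x. 0 \<le> V x) \<and>
          (\<forall>x. \<forall>t\<in>Tset T. 0 \<le> u x t) \<and> s_supersol p V u0 T a u
        \<longrightarrow> (\<forall>x.
              exp t0 * u x t0 \<ge> u0 x
                + (LINT \<tau>:{0..t0}|lborel. Bop (\<lambda>y. exp \<tau> * u y \<tau>) x)
                + (LINT \<tau>:{0..t0}|lborel. exp ((1 - p) * \<tau>) *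
                     Bop (\<lambda>y. V y * (exp \<tau> * u y \<tau>) powr p) x)
            \<and> u0 x
                + (LINT \<tau>:{0..t0}|lborel. Bop (\<lambda>y. exp \<tau> * u y \<tau>) x)
                + (LINT \<tau>:{0..t0}|lborel. exp ((1 - p) * \<tau>) *
                     Bop (\<lambda>y. V y * (exp \<tau> * u y \<tau>) powr p) x)
              \<ge> C0 * exp (- \<delta> * norm x)))"
  proof (intro exI[of _ "t0 * c"] conjI allI impI)
    show "t0 * c > 0" using t0 c by simp
  next
    fix a \<mu> assume H: "\<mu> \<in> Z T a \<and> (\<forall>x. \<forall>t\<in>Tset T. 0 \<le> \<mu> x t) \<and>
          (\<forall>x. \<forall>t\<in>Tset T. \<mu> x t \<ge> u0 x + (LINT \<tau>:{0..t}|lborel. Bop (\<lambda>y. \<mu> y \<tau>) x))"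
    fix x
    show "(LINT \<tau>:{0..t0}|lborel. Bop (\<lambda>y. \<mu> y \<tau>) x) \<ge> (t0 * c) * exp (- \<delta> * norm x)"
      using P1[of \<mu> a] H by blast
  next
    fix p V a u x
    assume H: "0 < p \<and> p < 1 \<and> continuous_on UNIV V \<and> (\<forall>x. 0 \<le> V x) \<and>
          (\<forall>x. \<forall>t\<in>Tset T. 0 \<le> u x t) \<and> s_supersol p V u0 T a u"
    have t0T: "t0 \<in> Tset T" using t0 unfolding Tset_def by auto
    have L2: "0 \<le> (LINT \<tau>:{0..t}|lborel. exp ((1 - p) * \<tau>) * Bop (\<lambda>y. V y * (exp \<tau> * u y \<tau>) powr p) x)"
      for t x
      using H by (intro set_int_nonneg mult_nonneg_nonneg Bop_nonneg) auto
    have SS: "(\<lambda>x t. exp t * u x t) \<in> Z T a"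
      "\<And>x t. t \<in> Tset T \<Longrightarrow> exp t * u x t \<ge> u0 x
          + (LINT \<tau>:{0..t}|lborel. Bop (\<lambda>y. exp \<tau> * u y \<tau>) x)
          + (LINT \<tau>:{0..t}|lborel. exp ((1 - p) * \<tau>) *
               Bop (\<lambda>y. V y * (exp \<tau> * u y \<tau>) powr p) x)"
      using H unfolding s_supersol_def by auto
    have hyp: "\<forall>x. \<forall>t\<in>Tset T. (\<lambda>x t. exp t * u x t) x t \<ge> u0 x + (LINT \<tau>:{0..t}|lborel. Bop (\<lambda>y. (\<lambda>x t. exp t * u x t) y \<tau>) x)"
      using SS(2) L2 by (smt (verit))
    have nnm: "\<forall>x. \<forall>t\<in>Tset T. 0 \<le> (\<lambda>x t. exp t * u x t) x t" using H by simp
    have low: "(t0 * c) * exp (- \<delta> * norm x) \<le> (LINT \<tau>:{0..t0}|lborel. Bop (\<lambda>y. exp \<tau> * u y \<tau>) x)"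
      using P1[OF SS(1) nnm hyp] by simp
    show "exp t0 * u x t0 \<ge> u0 x
                + (LINT \<tau>:{0..t0}|lborel. Bop (\<lambda>y. exp \<tau> * u y \<tau>) x)
                + (LINT \<tau>:{0..t0}|lborel. exp ((1 - p) * \<tau>) *
                     Bop (\<lambda>y. V y * (exp \<tau> * u y \<tau>) powr p) x)"
      by (rule SS(2)[OF t0T])
    show "u0 x
                + (LINT \<tau>:{0..t0}|lborel. Bop (\<lambda>y. exp \<tau> * u y \<tau>) x)
                + (LINT \<tau>:{0..t0}|lborel. exp ((1 - p) * \<tau>) *
                     Bop (\<lambda>y. V y * (exp \<tau> * u y \<tau>) powr p) x)
              \<ge> (t0 * c) * exp (- \<delta> * norm x)"
      using low L2[of t0 x] assms(3) by (smt (verit))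
  qed
qed


end
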